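(* Write $n=6m+b$ with integers $m\ge0$ and $0\le b\le5$. The number of nonzero terms of $H_n(x)$ is $m+2$ if $b=4$, and $m+1$ otherwise.
   Context: For $n\ge1$ let $\Xi_n$ be the poset on $\{x_1,\dots,x_n\}$ whose cover relations are exactly: $x_2\prec x_1$, $x_3\prec x_2$, and for $3\le i\le n-1$, $x_i\prec x_{i+1}$ if $i$ is odd and $x_{i+1}\prec x_i$ if $i$ is even (so $x_1>x_2>x_3<x_4>x_5<\cdots$). A filter of a poset is an up-closed subset. The matchable Lucas cube $\Omega_n$ is the graph whose vertices are the filters of $\Xi_n$, two filters adjacent iff one is obtained from the other by deleting a single element; $\Omega_0$ is the one-vertex graph. $h_{n,k}$ is the number of maximal induced $k$-dimensional hypercubes in $\Omega_n$ (induced $k$-cubes not contained in an induced $(k+1)$-cube), and $H_n(x)=\sum_{k\ge0}h_{n,k}x^k$. *)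

theory Defs
  imports Main
begin

(* Elements x_1..x_n of Xi_n are represented by the naturals 1..n.
   xi_cover n i j  means  x_i \<prec> x_j  (x_j covers x_i). *)
definition xi_cover :: "nat \<Rightarrow> nat \<Rightarrow> nat \<Rightarrow> bool" where
  "xi_cover n i j \<longleftrightarrow> 1 \<le> i \<and> i \<le> n \<and> 1 \<le> j \<and> j \<le> n \<and>
     ((i = 2 \<and> j = 1) \<or> (i = 3 \<and> j = 2) \<or>
      (\<exists>l. 3 \<le> l \<and> l \<le> n - 1 \<and>
         ((odd l \<and> i = l \<and> j = l + 1) \<or> (even l \<and> i = l + 1 \<and> j = l))))"

definition xi_le :: "nat \<Rightarrow> nat \<Rightarrow> nat \<Rightarrow> bool" where
  "xi_le n = (xi_cover n)\<^sup>*\<^sup>*"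

definition is_filter :: "nat \<Rightarrow> nat set \<Rightarrow> bool" where
  "is_filter n F \<longleftrightarrow> F \<subseteq> {1..n} \<and>
     (\<forall>x\<in>F. \<forall>y\<in>{1..n}. xi_le n x y \<longrightarrow> y \<in> F)"

definition omega_vertices :: "nat \<Rightarrow> nat set set" where
  "omega_vertices n = {F. is_filter n F}"

definition omega_adj :: "nat set \<Rightarrow> nat set \<Rightarrow> bool" where
  "omega_adj A B \<longleftrightarrow> (\<exists>a\<in>A. B = A - {a}) \<or> (\<exists>b\<in>B. A = B - {b})"

definition induced_cube ::
  "'v set \<Rightarrow> ('v \<Rightarrow> 'v \<Rightarrow> bool) \<Rightarrow> nat \<Rightarrow> 'v set \<Rightarrow> bool" where
  "induced_cube V adj k S \<longleftrightarrow> S \<subseteq> V \<and>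
     (\<exists>f. bij_betw f (Pow {..<k}) S \<and>
        (\<forall>X\<in>Pow {..<k}. \<forall>Y\<in>Pow {..<k}.
            adj (f X) (f Y) \<longleftrightarrow> card ((X - Y) \<union> (Y - X)) = 1))"

definition maximal_induced_cube ::
  "'v set \<Rightarrow> ('v \<Rightarrow> 'v \<Rightarrow> bool) \<Rightarrow> nat \<Rightarrow> 'v set \<Rightarrow> bool" where
  "maximal_induced_cube V adj k S \<longleftrightarrow> induced_cube V adj k S \<and>
     \<not> (\<exists>T. induced_cube V adj (Suc k) T \<and> S \<subseteq> T)"

definition h :: "nat \<Rightarrow> nat \<Rightarrow> nat" where
  "h n k = card {S. maximal_induced_cube (omega_vertices n) omega_adj k S}"

(* number of nonzero terms of H_n(x) = sum_k h_{n,k} x^k *)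
definition H_nonzero_terms :: "nat \<Rightarrow> nat" where
  "H_nonzero_terms n = card {k. h n k \<noteq> 0}"

end

theory Submission imports Defs begin

definition sd :: "'a set \<Rightarrow> 'a set \<Rightarrow> 'a set" where
  "sd A B = (A - B) \<union> (B - A)"

lemma sd_eq: assumes h: "sd A A' = E" shows "A' = sd A E"
  unfolding h[symmetric] sd_def by auto

lemma sd_single_in: "e \<in> A \<Longrightarrow> sd A {e} = A - {e}"
  unfolding sd_def by auto

lemma sd_single_notin: "e \<notin> A \<Longrightarrow> sd A {e} = insert e A"
  unfolding sd_def by auto

lemma adj_sd: "omega_adj A A' \<longleftrightarrow> (\<exists>e. sd A A' = {e})"
proof
  assume "omega_adj A A'"
  then consider a where "a \<in> A" "A' = A - {a}" | b where "b \<in> A'" "A = A' - {b}"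
    unfolding omega_adj_def by blast
  then show "\<exists>e. sd A A' = {e}"
  proof cases
    case 1
    then have "sd A A' = {a}" unfolding sd_def by auto
    then show ?thesis by blast
  next
    case 2
    then have "sd A A' = {b}" unfolding sd_def by auto
    then show ?thesis by blast
  qed
next
  assume "\<exists>e. sd A A' = {e}"
  then obtain e where e: "sd A A' = {e}" by blast
  have A': "A' = sd A {e}" using sd_eq[OF e] .
  show "omega_adj A A'"
  proof (cases "e \<in> A")
    case True
    then have "A' = A - {e}" using A' sd_single_in by simp
    then show ?thesis using True unfolding omega_adj_def by blast
  next
    case False
    then have "A' = insert e A" using A' sd_single_notin by simp
    then have "e \<in> A'" "A = A' - {e}" using False by auto
    then show ?thesis unfolding omega_adj_def by blast
  qed
qed
lemma sd_comm: "sd A B = sd B A"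
  unfolding sd_def by auto

lemma sd_assoc: "sd (sd A X) Y = sd A (sd X Y)"
  unfolding sd_def by auto

lemma sd_re: "sd Q (sd P X) = sd (sd Q P) X"
  unfolding sd_def by auto

lemma sd_self_empty: "sd Q P = {} \<longleftrightarrow> Q = P"
  unfolding sd_def by auto

lemma sd_two: "sd R {a} = {e} \<Longrightarrow> R = {} \<or> (R = {a, e} \<and> a \<noteq> e)"
proof -
  assume h: "sd R {a} = {e}"
  have "sd {a} R = {e}" using h sd_comm[of R "{a}"] by simp
  then have "R = sd {a} {e}" by (rule sd_eq)
  then show ?thesis
  proof (cases "a = e")
    case True
    then have "R = {}" using \<open>R = sd {a} {e}\<close> by (simp add: sd_def)
    then show ?thesis by blast
  next
    case False
    then have "R = {a, e}" using \<open>R = sd {a} {e}\<close> by (auto simp add: sd_def)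
    then show ?thesis using False by blast
  qed
qed

lemma sd_sq:
  assumes ab: "a \<noteq> b" and e1: "sd Q (sd P {a}) = {e1}" and e2: "sd Q (sd P {b}) = {e2}"
    and QP: "Q \<noteq> P"
  shows "Q = sd P {a, b}"
proof -
  define R where "R = sd Q P"
  have r1: "sd R {a} = {e1}" using e1 unfolding R_def sd_re .
  have r2: "sd R {b} = {e2}" using e2 unfolding R_def sd_re .
  have Rne: "R \<noteq> {}" using QP unfolding R_def sd_self_empty by simp
  from sd_two[OF r1] Rne have R1: "R = {a, e1}" by (elim disjE) simp_all
  from sd_two[OF r2] Rne have R2: "R = {b, e2}" by (elim disjE) simp_all
  have "{a, e1} = {b, e2}" using R1 R2 by simp
  then have "e1 = b" using ab unfolding doubleton_eq_iff by simp
  then have "R = {a, b}" using R1 by simp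
  have "sd P Q = R" unfolding R_def by (rule sd_comm)
  then have "Q = sd P R" by (rule sd_eq)
  then show ?thesis using \<open>R = {a,b}\<close> by simp
qed

definition cube :: "'a set \<Rightarrow> 'a set \<Rightarrow> 'a set set" where
  "cube B C = (\<lambda>D. B \<union> D) ` Pow C"

lemma induced_cube_struct:
  assumes "induced_cube V omega_adj k S"
  shows "\<exists>B C. B \<inter> C = {} \<and> finite C \<and> card C = k \<and> S = cube B C \<and> S \<subseteq> V"
proof -
  from assms obtain f where SV: "S \<subseteq> V" and bij: "bij_betw f (Pow {..<k}) S"
    and adj: "\<forall>X\<in>Pow {..<k}. \<forall>Y\<in>Pow {..<k}.
            omega_adj (f X) (f Y) \<longleftrightarrow> card ((X - Y) \<union> (Y - X)) = 1"
    unfolding induced_cube_def by auto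
  have inj: "inj_on f (Pow {..<k})" using bij unfolding bij_betw_def by simp
  have injf: "f X = f Y \<Longrightarrow> X \<subseteq> {..<k} \<Longrightarrow> Y \<subseteq> {..<k} \<Longrightarrow> X = Y" for X Y
    using inj unfolding inj_on_def by simp
  have adj': "\<exists>e. sd (f X) (f Y) = {e}"
    if X: "X \<subseteq> {..<k}" and Y: "Y \<subseteq> {..<k}" and c: "card (sd X Y) = 1" for X Y
  proof -
    have "omega_adj (f X) (f Y) \<longleftrightarrow> card (sd X Y) = 1"
      using adj X Y unfolding sd_def by simp
    then show ?thesis using c adj_sd by simp
  qed
  have ex: "\<exists>e. sd (f {}) (f {i}) = {e}" if "i < k" for i
  proof -
    have "sd {} {i} = {i}" unfolding sd_def by simp
    then show ?thesis using adj'[of "{}" "{i}"] that by simp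
  qed
  define \<phi> where "\<phi> i = (SOME e. sd (f {}) (f {i}) = {e})" for i
  have phi: "sd (f {}) (f {i}) = {\<phi> i}" if "i < k" for i
    unfolding \<phi>_def using someI_ex[OF ex[OF that]] .
  have step: "\<forall>i<k. i \<notin> X \<longrightarrow> f (insert i X) = sd (f X) {\<phi> i}"
    if "finite X" "X \<subseteq> {..<k}" for X
    using that
  proof (induction X rule: finite_induct)
    case empty
    show ?case
    proof (intro allI impI)
      fix i assume "i < k"
      from sd_eq[OF phi[OF this]] show "f (insert i {}) = sd (f {}) {\<phi> i}" by simp
    qed
  next
    case (insert j Y)
    show ?case
    proof (intro allI impI)
      fix i assume ik: "i < k" and iX: "i \<notin> insert j Y"
      have Yk: "Y \<subseteq> {..<k}" and jk: "j < k" using insert.prems by auto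
      have IH: "\<forall>i<k. i \<notin> Y \<longrightarrow> f (insert i Y) = sd (f Y) {\<phi> i}"
        using insert.IH Yk by simp
      have iY: "i \<notin> Y" and ij: "i \<noteq> j" using iX by auto
      have fi: "f (insert i Y) = sd (f Y) {\<phi> i}" using IH ik iY by simp
      have fj: "f (insert j Y) = sd (f Y) {\<phi> j}" using IH jk insert.hyps by simp
      have "insert i Y \<noteq> insert j Y" using iY ij by auto
      then have "f (insert i Y) \<noteq> f (insert j Y)"
        using injf[of "insert i Y" "insert j Y"] Yk ik jk by auto
      then have pij: "\<phi> i \<noteq> \<phi> j" using fi fj by auto
      define Q where "Q = f (insert i (insert j Y))"
      have s1: "sd (insert i (insert j Y)) (insert i Y) = {j}"
        using iX insert.hyps unfolding sd_def by auto
      have "\<exists>e. sd Q (f (insert i Y)) = {e}"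
        unfolding Q_def using Yk ik jk s1 by (intro adj') auto
      then obtain e1 where e1: "sd Q (f (insert i Y)) = {e1}" by blast
      have s2: "sd (insert i (insert j Y)) (insert j Y) = {i}"
        using iX insert.hyps unfolding sd_def by auto
      have "\<exists>e. sd Q (f (insert j Y)) = {e}"
        unfolding Q_def using Yk ik jk s2 by (intro adj') auto
      then obtain e2 where e2: "sd Q (f (insert j Y)) = {e2}" by blast
      have "insert i (insert j Y) \<noteq> Y" using iY by auto
      then have QP: "Q \<noteq> f Y" unfolding Q_def
        using injf[of "insert i (insert j Y)" Y] Yk ik jk by auto
      have e1': "sd Q (sd (f Y) {\<phi> i}) = {e1}" using e1 fi by simp
      have e2': "sd Q (sd (f Y) {\<phi> j}) = {e2}" using e2 fj by simp
      have "Q = sd (f Y) {\<phi> i, \<phi> j}" by (rule sd_sq[OF pij e1' e2' QP])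
      also have "\<dots> = sd (f (insert j Y)) {\<phi> i}"
      proof -
        have d: "sd {\<phi> j} {\<phi> i} = {\<phi> i, \<phi> j}" using pij unfolding sd_def by auto
        have "sd (f (insert j Y)) {\<phi> i} = sd (sd (f Y) {\<phi> j}) {\<phi> i}" using fj by simp
        also have "\<dots> = sd (f Y) (sd {\<phi> j} {\<phi> i})" by (rule sd_assoc)
        finally show ?thesis using d by simp
      qed
      finally show "f (insert i (insert j Y)) = sd (f (insert j Y)) {\<phi> i}"
        unfolding Q_def .
    qed
  qed
  have injphi: "inj_on \<phi> {..<k}"
  proof (rule inj_onI)
    fix i j assume i: "i \<in> {..<k}" and j: "j \<in> {..<k}" and e: "\<phi> i = \<phi> j"
    have "f {i} = sd (f {}) {\<phi> i}" using step[of "{}"] i by simp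
    moreover have "f {j} = sd (f {}) {\<phi> j}" using step[of "{}"] j by simp
    ultimately have "f {i} = f {j}" using e by simp
    then have "{i} = {j}" using injf[of "{i}" "{j}"] i j by simp
    then show "i = j" by simp
  qed
  define F0 where "F0 = f {}"
  have form: "f X = sd F0 (\<phi> ` X)" if "finite X" "X \<subseteq> {..<k}" for X
    using that
  proof (induction X rule: finite_induct)
    case empty
    then show ?case unfolding F0_def sd_def by simp
  next
    case (insert i X)
    have "f (insert i X) = sd (f X) {\<phi> i}" using step[of X] insert by simp
    also have "\<dots> = sd (sd F0 (\<phi> ` X)) {\<phi> i}" using insert by simp
    also have "\<dots> = sd F0 (sd (\<phi> ` X) {\<phi> i})" by (rule sd_assoc)
    also have "\<phi> i \<notin> \<phi> ` X" using injphi insert unfolding inj_on_def by auto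
    then have "sd (\<phi> ` X) {\<phi> i} = \<phi> ` insert i X" unfolding sd_def by auto
    finally show ?case .
  qed
  define C where "C = \<phi> ` {..<k}"
  define B where "B = F0 - C"
  define E where "E = F0 \<inter> C"
  have "S = f ` Pow {..<k}" using bij unfolding bij_betw_def by simp
  also have "\<dots> = (\<lambda>X. sd F0 (\<phi> ` X)) ` Pow {..<k}"
  proof (rule image_cong)
    fix X assume "X \<in> Pow {..<k}"
    then show "f X = sd F0 (\<phi> ` X)" using form finite_subset[of X "{..<k}"] by simp
  qed simp
  also have "\<dots> = (\<lambda>W. sd F0 W) ` ((image \<phi>) ` Pow {..<k})" by (simp add: image_image)
  also have "(image \<phi>) ` Pow {..<k} = Pow C" unfolding C_def by (rule image_Pow_surj) simp
  also have "(\<lambda>W. sd F0 W) ` Pow C = cube B C"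
  proof
    show "(\<lambda>W. sd F0 W) ` Pow C \<subseteq> cube B C"
    proof
      fix A assume "A \<in> (\<lambda>W. sd F0 W) ` Pow C"
      then obtain W where W: "W \<subseteq> C" "A = sd F0 W" by auto
      then have "A = B \<union> sd E W" "sd E W \<subseteq> C" unfolding B_def E_def sd_def by auto
      then show "A \<in> cube B C" unfolding cube_def by auto
    qed
  next
    show "cube B C \<subseteq> (\<lambda>W. sd F0 W) ` Pow C"
    proof
      fix A assume "A \<in> cube B C"
      then obtain D where D: "D \<subseteq> C" "A = B \<union> D" unfolding cube_def by auto
      then have "A = sd F0 (sd E D)" "sd E D \<subseteq> C" unfolding B_def E_def sd_def by auto
      then show "A \<in> (\<lambda>W. sd F0 W) ` Pow C" by auto
    qed
  qed
  finally have "S = cube B C" .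
  moreover have "B \<inter> C = {}" unfolding B_def by auto
  moreover have "finite C" "card C = k" unfolding C_def using card_image[OF injphi] by auto
  ultimately show ?thesis using SV by auto
qed

lemma cube_induced:
  assumes BC: "B \<inter> C = {}" and fin: "finite C" and ck: "card C = k" and CV: "cube B C \<subseteq> V"
  shows "induced_cube V omega_adj k (cube B C)"
proof -
  obtain \<psi> where psi: "bij_betw \<psi> {..<k} C"
    using finite_same_card_bij[of "{..<k}" C] fin ck by auto
  have injp: "inj_on \<psi> {..<k}" and imp: "\<psi> ` {..<k} = C" using psi unfolding bij_betw_def by auto
  define f where "f X = B \<union> \<psi> ` X" for X
  have "bij_betw f (Pow {..<k}) (cube B C)"
    unfolding bij_betw_def
  proof
    show "inj_on f (Pow {..<k})"
    proof (rule inj_onI)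
      fix X Y assume X: "X \<in> Pow {..<k}" and Y: "Y \<in> Pow {..<k}" and eq: "f X = f Y"
      have sx: "\<psi> ` X \<subseteq> C" and sy: "\<psi> ` Y \<subseteq> C" using X Y imp by auto
      have "\<psi> ` X = (f X) \<inter> C" using sx BC unfolding f_def by auto
      also have "\<dots> = (f Y) \<inter> C" using eq by simp
      also have "\<dots> = \<psi> ` Y" using sy BC unfolding f_def by auto
      finally have "\<psi> ` X = \<psi> ` Y" .
      then show "X = Y" using inj_on_image_eq_iff[OF injp] X Y by simp
    qed
  next
    have "f ` Pow {..<k} = (\<lambda>D. B \<union> D) ` ((image \<psi>) ` Pow {..<k})"
      unfolding f_def by (simp add: image_image)
    also have "(image \<psi>) ` Pow {..<k} = Pow C" by (rule image_Pow_surj[OF imp])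
    finally show "f ` Pow {..<k} = cube B C" unfolding cube_def .
  qed
  moreover have "omega_adj (f X) (f Y) \<longleftrightarrow> card ((X - Y) \<union> (Y - X)) = 1"
    if X: "X \<in> Pow {..<k}" and Y: "Y \<in> Pow {..<k}" for X Y
  proof -
    have sx: "\<psi> ` X \<subseteq> C" and sy: "\<psi> ` Y \<subseteq> C" using X Y imp by auto
    have "sd (f X) (f Y) = sd (\<psi> ` X) (\<psi> ` Y)" using sx sy BC unfolding f_def sd_def by auto
    also have "\<dots> = \<psi> ` (sd X Y)"
    proof -
      have ij: "inj_on \<psi> (X \<union> Y)" using injp X Y by (auto intro: inj_on_subset)
      have "\<psi> ` X - \<psi> ` Y = \<psi> ` (X - Y)" using ij by (auto simp: inj_on_def)
      moreover have "\<psi> ` Y - \<psi> ` X = \<psi> ` (Y - X)" using ij by (auto simp: inj_on_def)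
      ultimately show ?thesis unfolding sd_def by (simp add: image_Un)
    qed
    finally have e: "sd (f X) (f Y) = \<psi> ` (sd X Y)" .
    have "inj_on \<psi> (sd X Y)" using injp X Y unfolding sd_def by (auto intro: inj_on_subset)
    then have c: "card (\<psi> ` sd X Y) = card (sd X Y)" by (rule card_image)
    have "omega_adj (f X) (f Y) \<longleftrightarrow> card (sd (f X) (f Y)) = 1"
      unfolding adj_sd using card_1_singleton_iff[of "sd (f X) (f Y)"] by simp
    also have "\<dots> \<longleftrightarrow> card (sd X Y) = 1" using e c by simp
    finally show ?thesis unfolding sd_def .
  qed
  ultimately show ?thesis unfolding induced_cube_def using CV by auto
qed

lemma filter_iff:
  "is_filter n F \<longleftrightarrow> F \<subseteq> {1..n} \<and> (\<forall>i j. xi_cover n i j \<longrightarrow> i \<in> F \<longrightarrow> j \<in> F)"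
proof
  assume h: "is_filter n F"
  show "F \<subseteq> {1..n} \<and> (\<forall>i j. xi_cover n i j \<longrightarrow> i \<in> F \<longrightarrow> j \<in> F)"
  proof (intro conjI allI impI)
    show "F \<subseteq> {1..n}" using h unfolding is_filter_def by simp
  next
    fix i j assume c: "xi_cover n i j" and i: "i \<in> F"
    have "xi_le n i j" unfolding xi_le_def using c by (rule r_into_rtranclp)
    moreover have "j \<in> {1..n}" using c unfolding xi_cover_def by simp
    ultimately show "j \<in> F" using h i unfolding is_filter_def by blast
  qed
next
  assume h: "F \<subseteq> {1..n} \<and> (\<forall>i j. xi_cover n i j \<longrightarrow> i \<in> F \<longrightarrow> j \<in> F)"
  have "y \<in> F" if "xi_le n x y" "x \<in> F" for x y
    using that(1)[unfolded xi_le_def] that(2)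
  proof (induction rule: rtranclp_induct)
    case base
    then show ?case by simp
  next
    case (step y z)
    then show ?case using h by blast
  qed
  then show "is_filter n F" using h unfolding is_filter_def by blast
qed

definition valid :: "nat \<Rightarrow> nat set \<Rightarrow> nat set \<Rightarrow> bool" where
  "valid n B C \<longleftrightarrow> B \<inter> C = {} \<and> B \<union> C \<subseteq> {1..n} \<and>
     (\<forall>i j. xi_cover n i j \<longrightarrow> i \<in> B \<longrightarrow> j \<in> B) \<and>
     (\<forall>i j. xi_cover n i j \<longrightarrow> i \<in> C \<longrightarrow> j \<in> B)"

definition maxl :: "nat \<Rightarrow> nat set \<Rightarrow> nat set \<Rightarrow> bool" where
  "maxl n B C \<longleftrightarrow> (\<forall>y\<in>{1..n}. y \<notin> B \<longrightarrow> y \<notin> C \<longrightarrow> (\<exists>j. xi_cover n y j \<and> j \<notin> B)) \<and>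
     (\<forall>y\<in>B. \<exists>i. xi_cover n i y \<and> (i \<in> B \<or> i \<in> C))"

lemma cover_irrefl: "\<not> xi_cover n i i"
  unfolding xi_cover_def by auto

lemma cube_sub_iff:
  assumes BC: "B \<inter> C = {}"
  shows "cube B C \<subseteq> omega_vertices n \<longleftrightarrow> valid n B C"
proof
  assume h: "cube B C \<subseteq> omega_vertices n"
  have fB: "is_filter n B"
  proof -
    have "B \<in> cube B C" unfolding cube_def by (rule image_eqI[of _ _ "{}"]) auto
    then show ?thesis using h unfolding omega_vertices_def by auto
  qed
  have fc: "is_filter n (B \<union> {c})" if "c \<in> C" for c
  proof -
    have "B \<union> {c} \<in> cube B C" unfolding cube_def using that by auto
    then show ?thesis using h unfolding omega_vertices_def by auto
  qed
  show "valid n B C" unfolding valid_def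
  proof (intro conjI allI impI)
    show "B \<inter> C = {}" by (rule BC)
    show "B \<union> C \<subseteq> {1..n}"
    proof
      fix x assume "x \<in> B \<union> C"
      then show "x \<in> {1..n}"
      proof
        assume "x \<in> B" then show ?thesis using fB unfolding filter_iff by auto
      next
        assume "x \<in> C" then show ?thesis using fc[of x] unfolding filter_iff by auto
      qed
    qed
  next
    fix i j assume "xi_cover n i j" "i \<in> B" then show "j \<in> B" using fB unfolding filter_iff by blast
  next
    fix i j assume c: "xi_cover n i j" and i: "i \<in> C"
    then have "j \<in> B \<union> {i}" using fc[OF i] unfolding filter_iff by blast
    moreover have "j \<noteq> i" using c cover_irrefl by metis
    ultimately show "j \<in> B" by simp
  qed
next
  assume v: "valid n B C"
  show "cube B C \<subseteq> omega_vertices n"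
  proof
    fix A assume "A \<in> cube B C"
    then obtain D where D: "D \<subseteq> C" "A = B \<union> D" unfolding cube_def by auto
    have "A \<subseteq> {1..n}" using D v unfolding valid_def by auto
    moreover have "\<forall>i j. xi_cover n i j \<longrightarrow> i \<in> A \<longrightarrow> j \<in> A"
      using D v unfolding valid_def by blast
    ultimately show "A \<in> omega_vertices n" unfolding omega_vertices_def filter_iff by simp
  qed
qed

lemma fin_omega: "finite (omega_vertices n)"
proof -
  have "omega_vertices n \<subseteq> Pow {1..n}" unfolding omega_vertices_def is_filter_def by auto
  then show ?thesis by (rule finite_subset) simp
qed

lemma maxcube_iff:
  "(\<exists>S. maximal_induced_cube (omega_vertices n) omega_adj k S) \<longleftrightarrow>
     (\<exists>B C. valid n B C \<and> maxl n B C \<and> card C = k)"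
proof
  assume "\<exists>S. maximal_induced_cube (omega_vertices n) omega_adj k S"
  then obtain S where ind: "induced_cube (omega_vertices n) omega_adj k S"
    and nomax: "\<not> (\<exists>T. induced_cube (omega_vertices n) omega_adj (Suc k) T \<and> S \<subseteq> T)"
    unfolding maximal_induced_cube_def by blast
  obtain B C where BC: "B \<inter> C = {}" and fC: "finite C" and ck: "card C = k"
    and SBC: "S = cube B C" and SV: "S \<subseteq> omega_vertices n"
    using induced_cube_struct[OF ind] by blast
  have v: "valid n B C" using cube_sub_iff[OF BC] SV SBC by simp
  have m1: "\<exists>j. xi_cover n y j \<and> j \<notin> B" if y: "y \<in> {1..n}" "y \<notin> B" "y \<notin> C" for y
  proof (rule ccontr)
    assume "\<not> (\<exists>j. xi_cover n y j \<and> j \<notin> B)"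
    then have up: "\<forall>j. xi_cover n y j \<longrightarrow> j \<in> B" by blast
    have BC': "B \<inter> insert y C = {}" using BC y by auto
    have v': "valid n B (insert y C)" using v y up unfolding valid_def by auto
    have "induced_cube (omega_vertices n) omega_adj (Suc k) (cube B (insert y C))"
      using cube_induced[OF BC'] fC ck y v' cube_sub_iff[OF BC'] by simp
    moreover have "S \<subseteq> cube B (insert y C)" unfolding SBC cube_def by auto
    ultimately show False using nomax by blast
  qed
  have m2: "\<exists>i. xi_cover n i y \<and> (i \<in> B \<or> i \<in> C)" if y: "y \<in> B" for y
  proof (rule ccontr)
    assume "\<not> (\<exists>i. xi_cover n i y \<and> (i \<in> B \<or> i \<in> C))"
    then have lo: "\<forall>i. xi_cover n i y \<longrightarrow> i \<notin> B \<and> i \<notin> C" by blast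
    have yC: "y \<notin> C" using BC y by auto
    have BC': "(B - {y}) \<inter> insert y C = {}" using BC by auto
    have v': "valid n (B - {y}) (insert y C)"
      unfolding valid_def
    proof (intro conjI allI impI)
      show "(B - {y}) \<inter> insert y C = {}" by (rule BC')
      show "B - {y} \<union> insert y C \<subseteq> {1..n}" using v y unfolding valid_def by auto
    next
      fix i j assume c: "xi_cover n i j" and i: "i \<in> B - {y}"
      then have "j \<in> B" using v unfolding valid_def by blast
      moreover have "j \<noteq> y" using lo c i by auto
      ultimately show "j \<in> B - {y}" by simp
    next
      fix i j assume c: "xi_cover n i j" and i: "i \<in> insert y C"
      have "j \<in> B"
      proof (cases "i = y")
        case True then show ?thesis using v c y unfolding valid_def by blast
      next
        case False then show ?thesis using v c i unfolding valid_def by blast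
      qed
      moreover have "j \<noteq> y"
      proof
        assume "j = y"
        then show False using c lo i cover_irrefl by (cases "i = y") auto
      qed
      ultimately show "j \<in> B - {y}" by simp
    qed
    have "induced_cube (omega_vertices n) omega_adj (Suc k) (cube (B - {y}) (insert y C))"
      using cube_induced[OF BC'] fC ck yC v' cube_sub_iff[OF BC'] by simp
    moreover have "S \<subseteq> cube (B - {y}) (insert y C)"
    proof
      fix A assume "A \<in> S"
      then obtain D where D: "D \<subseteq> C" "A = B \<union> D" unfolding SBC cube_def by auto
      have "A = (B - {y}) \<union> insert y D" using D y by auto
      then show "A \<in> cube (B - {y}) (insert y C)" unfolding cube_def using D by auto
    qed
    ultimately show False using nomax by blast
  qed
  have "maxl n B C" unfolding maxl_def using m1 m2 by blast
  then show "\<exists>B C. valid n B C \<and> maxl n B C \<and> card C = k" using v ck by blast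
next
  assume "\<exists>B C. valid n B C \<and> maxl n B C \<and> card C = k"
  then obtain B C where v: "valid n B C" and m: "maxl n B C" and ck: "card C = k" by blast
  have BC: "B \<inter> C = {}" using v unfolding valid_def by simp
  have fC: "finite C" using v unfolding valid_def by (auto intro: finite_subset)
  have ind: "induced_cube (omega_vertices n) omega_adj k (cube B C)"
    using cube_induced[OF BC fC ck] cube_sub_iff[OF BC] v by simp
  have "\<not> (\<exists>T. induced_cube (omega_vertices n) omega_adj (Suc k) T \<and> cube B C \<subseteq> T)"
  proof
    assume "\<exists>T. induced_cube (omega_vertices n) omega_adj (Suc k) T \<and> cube B C \<subseteq> T"
    then obtain T where indT: "induced_cube (omega_vertices n) omega_adj (Suc k) T"
      and sub: "cube B C \<subseteq> T" by blast
    obtain B' C' where BC': "B' \<inter> C' = {}" and fC': "finite C'" and ck': "card C' = Suc k"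
      and TBC: "T = cube B' C'" and TV: "T \<subseteq> omega_vertices n"
      using induced_cube_struct[OF indT] by blast
    have v': "valid n B' C'" using cube_sub_iff[OF BC'] TV TBC by simp
    have "B \<in> cube B C" unfolding cube_def by (rule image_eqI[of _ _ "{}"]) auto
    then have "B \<in> cube B' C'" using sub TBC by auto
    then obtain D1 where D1: "D1 \<subseteq> C'" "B = B' \<union> D1" unfolding cube_def by auto
    have "B \<union> C \<in> cube B C" unfolding cube_def by auto
    then have "B \<union> C \<in> cube B' C'" using sub TBC by auto
    then obtain D2 where D2: "D2 \<subseteq> C'" "B \<union> C = B' \<union> D2" unfolding cube_def by auto
    have B'B: "B' \<subseteq> B" using D1 by auto
    have CC': "C \<subseteq> C'" using D2 BC B'B by auto
    have "\<not> C' \<subseteq> C"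
    proof
      assume "C' \<subseteq> C"
      then have "card C' \<le> card C" using fC by (rule card_mono[rotated])
      then show False using ck ck' by simp
    qed
    then obtain y where yC': "y \<in> C'" and yC: "y \<notin> C" by blast
    have yB': "y \<notin> B'" using BC' yC' by auto
    show False
    proof (cases "y \<in> B")
      case True
      then obtain i where c: "xi_cover n i y" and i: "i \<in> B \<or> i \<in> C" using m unfolding maxl_def by blast
      have "i \<in> B' \<or> i \<in> C'" using i D1 CC' by auto
      then have "y \<in> B'" using v' c unfolding valid_def by blast
      then show False using yB' by simp
    next
      case False
      have "y \<in> {1..n}" using v' yC' unfolding valid_def by auto
      then obtain j where c: "xi_cover n y j" and j: "j \<notin> B" using m False yC unfolding maxl_def by blast
      have "j \<in> B'" using v' c yC' unfolding valid_def by blast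
      then show False using j B'B by auto
    qed
  qed
  then have "maximal_induced_cube (omega_vertices n) omega_adj k (cube B C)"
    unfolding maximal_induced_cube_def using ind by simp
  then show "\<exists>S. maximal_induced_cube (omega_vertices n) omega_adj k S" by blast
qed

definition zc :: "nat \<Rightarrow> nat \<Rightarrow> bool" where
  "zc i j \<longleftrightarrow> (i = 2 \<and> j = 1) \<or> (i = 3 \<and> j = 2) \<or> (3 \<le> i \<and> odd i \<and> j = Suc i) \<or>
     (4 \<le> j \<and> even j \<and> i = Suc j)"

lemma cover_iff: "xi_cover n i j \<longleftrightarrow> i \<le> n \<and> j \<le> n \<and> zc i j"
proof
  assume "xi_cover n i j"
  moreover have ev4: "\<And>l::nat. even l \<Longrightarrow> 3 \<le> l \<Longrightarrow> 4 \<le> l" by presburger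
  ultimately show "i \<le> n \<and> j \<le> n \<and> zc i j"
    unfolding xi_cover_def zc_def by fastforce
next
  assume h: "i \<le> n \<and> j \<le> n \<and> zc i j"
  then consider "i = 2 \<and> j = 1" | "i = 3 \<and> j = 2" | "3 \<le> i \<and> odd i \<and> j = Suc i" |
    "4 \<le> j \<and> even j \<and> i = Suc j" unfolding zc_def by blast
  then show "xi_cover n i j"
  proof cases
    case 1 then show ?thesis using h unfolding xi_cover_def by auto
  next
    case 2 then show ?thesis using h unfolding xi_cover_def by auto
  next
    case 3
    have "\<exists>l. 3 \<le> l \<and> l \<le> n - 1 \<and> ((odd l \<and> i = l \<and> j = l + 1) \<or> (even l \<and> i = l + 1 \<and> j = l))"
      by (rule exI[of _ i]) (use h 3 in auto)
    then show ?thesis using h 3 unfolding xi_cover_def by auto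
  next
    case 4
    have "\<exists>l. 3 \<le> l \<and> l \<le> n - 1 \<and> ((odd l \<and> i = l \<and> j = l + 1) \<or> (even l \<and> i = l + 1 \<and> j = l))"
      by (rule exI[of _ j]) (use h 4 in auto)
    then show ?thesis using h 4 unfolding xi_cover_def by auto
  qed
qed

lemma zc_adj: "zc i j \<Longrightarrow> j = Suc i \<or> i = Suc j"
  unfolding zc_def by auto

lemma zc_up_none: "y = 1 \<or> (even y \<and> 4 \<le> y) \<Longrightarrow> \<not> zc y j"
  unfolding zc_def by auto

lemma zc_low_none: "odd y \<Longrightarrow> 3 \<le> y \<Longrightarrow> \<not> zc i y"
  unfolding zc_def by auto

lemma zc_big: "3 \<le> i \<Longrightarrow> zc i j \<longleftrightarrow> (odd i \<and> j = Suc i) \<or> (even j \<and> i = Suc j)"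
  unfolding zc_def by auto

lemma valid_cov: "valid n B C \<Longrightarrow> xi_cover n i j \<Longrightarrow> i \<in> B \<Longrightarrow> j \<in> B"
  unfolding valid_def by blast

lemma valid_covC: "valid n B C \<Longrightarrow> xi_cover n i j \<Longrightarrow> i \<in> C \<Longrightarrow> j \<in> B"
  unfolding valid_def by blast

lemma valid_disj: "valid n B C \<Longrightarrow> i \<in> C \<Longrightarrow> i \<notin> B"
  unfolding valid_def by blast

lemma valid_sub: "valid n B C \<Longrightarrow> i \<in> B \<union> C \<Longrightarrow> 1 \<le> i \<and> i \<le> n"
  unfolding valid_def by auto

lemma ub:
  assumes v: "valid n B C" and n2: "2 \<le> n"
  shows "card C \<le> n div 2"
proof -
  have nc: False if "i \<in> C" "Suc i \<in> C" for i
  proof -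
    have i1: "1 \<le> i" "Suc i \<le> n" using valid_sub[OF v, of i] valid_sub[OF v, of "Suc i"] that by auto
    have "i = 1 \<or> i = 2 \<or> (3 \<le> i \<and> odd i) \<or> (3 \<le> i \<and> even i)" using i1 by auto
    then consider "i = 1" | "i = 2" | "3 \<le> i" "odd i" | "3 \<le> i" "even i" by blast
    then show False
    proof cases
      case 1
      have "xi_cover n 2 1" unfolding cover_iff zc_def using i1 1 by auto
      then have "1 \<in> B" using valid_covC[OF v, of 2 1] that 1 by (auto simp: numeral_2_eq_2)
      then show False using valid_disj[OF v] that 1 by auto
    next
      case 2
      have "xi_cover n 3 2" unfolding cover_iff zc_def using i1 2 by auto
      then have "2 \<in> B" using valid_covC[OF v, of 3 2] that 2 by (auto simp: numeral_3_eq_3 numeral_2_eq_2)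
      then show False using valid_disj[OF v] that 2 by auto
    next
      case 3
      have "xi_cover n i (Suc i)" unfolding cover_iff zc_def using i1 3 by auto
      then have "Suc i \<in> B" using valid_covC[OF v] that by auto
      then show False using valid_disj[OF v] that by auto
    next
      case 4
      have "xi_cover n (Suc i) i" unfolding cover_iff zc_def using i1 4 by auto
      then have "i \<in> B" using valid_covC[OF v] that by auto
      then show False using valid_disj[OF v] that by auto
    qed
  qed
  have n13: False if "1 \<in> C" "3 \<in> C"
  proof -
    have n3: "3 \<le> n" using valid_sub[OF v, of 3] that by auto
    have "xi_cover n 3 2" unfolding cover_iff zc_def using n3 by auto
    then have "2 \<in> B" using valid_covC[OF v, of 3 2] that by auto
    moreover have "xi_cover n 2 1" unfolding cover_iff zc_def using n3 by auto
    ultimately have "1 \<in> B" using valid_cov[OF v, of 2 1] by auto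
    then show False using valid_disj[OF v] that by auto
  qed
  define g where "g c = (if c \<le> 3 then 1 else c div 2)" for c :: nat
  have mono: "g c < g d" if c: "c \<in> C" and d: "d \<in> C" and cd: "c < d" for c d
  proof -
    have c1: "1 \<le> c" using valid_sub[OF v, of c] c by auto
    show ?thesis
    proof (cases "d \<le> 3")
      case True
      then have "d = Suc c \<or> (c = 1 \<and> d = 3)" using c1 cd by auto
      then show ?thesis using nc[of c] n13 c d by auto
    next
      case False
      have "d \<noteq> Suc c" using nc[of c] c d by auto
      then show ?thesis unfolding g_def using False cd by auto
    qed
  qed
  have inj: "inj_on g C"
  proof (rule inj_onI)
    fix c d assume c: "c \<in> C" and d: "d \<in> C" and e: "g c = g d"
    show "c = d"
    proof (rule ccontr)
      assume "c \<noteq> d"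
      then have "c < d \<or> d < c" by auto
      then show False using mono[OF c d] mono[OF d c] e by auto
    qed
  qed
  have img: "g ` C \<subseteq> {1..n div 2}"
  proof
    fix x assume "x \<in> g ` C"
    then obtain c where c: "c \<in> C" "x = g c" by auto
    have "1 \<le> c" "c \<le> n" using valid_sub[OF v, of c] c by auto
    then show "x \<in> {1..n div 2}" unfolding c g_def using n2 by auto
  qed
  have "card C = card (g ` C)" using card_image[OF inj] by simp
  also have "\<dots> \<le> card {1..n div 2}" using img by (rule card_mono[rotated]) simp
  finally show ?thesis by simp
qed

lemma maxl1: "maxl n B C \<Longrightarrow> 1 \<le> y \<Longrightarrow> y \<le> n \<Longrightarrow> y \<notin> B \<Longrightarrow> y \<notin> C \<Longrightarrow>
    \<exists>j. xi_cover n y j \<and> j \<notin> B"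
  unfolding maxl_def by auto

lemma maxl2: "maxl n B C \<Longrightarrow> y \<in> B \<Longrightarrow> \<exists>i. xi_cover n i y \<and> (i \<in> B \<or> i \<in> C)"
  unfolding maxl_def by auto

lemma noB_odd: "maxl n B C \<Longrightarrow> odd y \<Longrightarrow> 3 \<le> y \<Longrightarrow> y \<notin> B"
  using maxl2[of n B C y] zc_low_none[of y] unfolding cover_iff by blast

lemma top_BC: "maxl n B C \<Longrightarrow> 1 \<le> y \<Longrightarrow> y \<le> n \<Longrightarrow> y = 1 \<or> (even y \<and> 4 \<le> y) \<Longrightarrow> y \<in> B \<or> y \<in> C"
  using maxl1[of n B C y] zc_up_none[of y] unfolding cover_iff by blast

lemma lb:
  assumes v: "valid n B C" and m: "maxl n B C"
  shows "n \<le> 3 * card C + 1"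
proof -
  define dm where "dm y \<longleftrightarrow> y \<in> C \<or> Suc y \<in> C \<or> (0 < y \<and> y - 1 \<in> C)" for y
  define D where "D = (\<Union>c\<in>C. {c - 1, c, Suc c})"
  have fC: "finite C" using v unfolding valid_def by (auto intro: finite_subset)
  have dmD: "y \<in> D" if dy: "dm y" for y
  proof -
    consider "y \<in> C" | "Suc y \<in> C" | "0 < y" "y - 1 \<in> C" using dy unfolding dm_def by blast
    then show ?thesis
    proof cases
      case 1 then show ?thesis unfolding D_def by blast
    next
      case 2
      have "y \<in> {Suc y - 1, Suc y, Suc (Suc y)}" by simp
      then show ?thesis unfolding D_def using 2 by blast
    next
      case 3
      have "y \<in> {(y - 1) - 1, y - 1, Suc (y - 1)}" using 3 by simp
      then show ?thesis unfolding D_def using 3 by blast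
    qed
  qed
  have cardD: "card D \<le> 3 * card C"
  proof -
    have "card D \<le> (\<Sum>c\<in>C. card {c - 1, c, Suc c})" unfolding D_def by (rule card_UN_le[OF fC])
    also have "\<dots> \<le> (\<Sum>c\<in>C. 3)"
    proof (rule sum_mono)
      fix c show "card {c - 1, c, Suc c} \<le> 3" by (rule order_trans[OF card_insert_le_m1]) (auto simp: card_insert_le_m1)
    qed
    finally show ?thesis by simp
  qed
  have big: "dm y" if y: "4 \<le> y" "y \<le> n" for y
  proof (cases "even y")
    case True
    have "y \<in> B \<or> y \<in> C" using top_BC[OF m, of y] y True by auto
    then show ?thesis
    proof
      assume yB: "y \<in> B"
      obtain i where c: "xi_cover n i y" and i: "i \<in> B \<or> i \<in> C" using maxl2[OF m yB] by blast
      have z: "zc i y" using c unfolding cover_iff by simp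
      have "i = Suc y \<or> y = Suc i" using zc_adj[OF z] by auto
      then have "odd i" "3 \<le> i" using True y by auto
      then have "i \<notin> B" using noB_odd[OF m] by blast
      then have "i \<in> C" using i by simp
      then show ?thesis unfolding dm_def using \<open>i = Suc y \<or> y = Suc i\<close> by auto
    next
      assume "y \<in> C" then show ?thesis unfolding dm_def by simp
    qed
  next
    case False
    show ?thesis
    proof (cases "y \<in> C")
      case True then show ?thesis unfolding dm_def by simp
    next
      case yC: False
      have yB: "y \<notin> B" using noB_odd[OF m] False y by auto
      obtain j where c: "xi_cover n y j" and j: "j \<notin> B" using maxl1[OF m _ _ yB yC] y by auto
      have z: "zc y j" and jn: "j \<le> n" using c unfolding cover_iff by auto
      have adj: "j = Suc y \<or> y = Suc j" using zc_adj[OF z] by auto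
      then have ej: "even j" "3 \<le> j" "1 \<le> j" using False y by auto
      then have "4 \<le> j" by presburger
      note ej = ej this
      have "j \<in> B \<or> j \<in> C" using top_BC[OF m, of j] jn ej by auto
      then have "j \<in> C" using j by simp
      then show ?thesis unfolding dm_def using adj by auto
    qed
  qed
  have two: "dm 2" if n2: "2 \<le> n"
  proof (cases "2 \<in> C")
    case True then show ?thesis unfolding dm_def by simp
  next
    case C2: False
    show ?thesis
    proof (cases "2 \<in> B")
      case True
      obtain i where c: "xi_cover n i 2" and i: "i \<in> B \<or> i \<in> C" using maxl2[OF m True] by blast
      have "zc i 2" using c unfolding cover_iff by simp
      then have "i = 3" unfolding zc_def by auto
      then have "i \<in> C" using i noB_odd[OF m, of 3] by auto
      then show ?thesis unfolding dm_def using \<open>i = 3\<close> by (simp add: numeral_3_eq_3 numeral_2_eq_2)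
    next
      case False
      obtain j where c: "xi_cover n 2 j" and j: "j \<notin> B" using maxl1[OF m _ _ False C2] n2 by auto
      have "zc 2 j" using c unfolding cover_iff by simp
      then have "j = 1" unfolding zc_def by auto
      then have "j \<in> C" using j top_BC[OF m, of 1] n2 by auto
      then show ?thesis unfolding dm_def using \<open>j = 1\<close> by (simp add: numeral_2_eq_2)
    qed
  qed
  have onethree: "dm 1 \<or> dm 3" if "3 \<le> n"
  proof (cases "3 \<in> C")
    case True then show ?thesis unfolding dm_def by simp
  next
    case C3: False
    have "1 \<in> B \<or> 1 \<in> C" using top_BC[OF m, of 1] that by auto
    then have "dm 1"
    proof
      assume "1 \<in> C" then show ?thesis unfolding dm_def by simp
    next
      assume B1: "1 \<in> B"
      obtain i where c: "xi_cover n i 1" and i: "i \<in> B \<or> i \<in> C" using maxl2[OF m B1] by blast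
      have "zc i 1" using c unfolding cover_iff by simp
      then have i2: "i = 2" unfolding zc_def by auto
      show ?thesis
      proof (cases "2 \<in> C")
        case True then show ?thesis unfolding dm_def by (simp add: numeral_2_eq_2)
      next
        case False
        then have B2: "2 \<in> B" using i i2 by simp
        obtain i' where c': "xi_cover n i' 2" and i': "i' \<in> B \<or> i' \<in> C" using maxl2[OF m B2] by blast
        have "zc i' 2" using c' unfolding cover_iff by simp
        then have "i' = 3" unfolding zc_def by auto
        then have "3 \<in> C" using i' noB_odd[OF m, of 3] by auto
        then show ?thesis using C3 by simp
      qed
    qed
    then show ?thesis by simp
  qed
  obtain u where u: "{1..n} - {u} \<subseteq> D"
  proof (cases "3 \<le> n")
    case True
    then consider "dm 1" | "dm 3" using onethree by blast
    then show ?thesis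
    proof cases
      case 1
      have "{1..n} - {3} \<subseteq> D"
      proof
        fix y assume y: "y \<in> {1..n} - {3}"
        then have "y = 1 \<or> y = 2 \<or> 4 \<le> y" by auto
        then have "dm y" using 1 two big y by auto
        then show "y \<in> D" by (rule dmD)
      qed
      then show ?thesis using that by blast
    next
      case 2
      have "{1..n} - {1} \<subseteq> D"
      proof
        fix y assume y: "y \<in> {1..n} - {1}"
        then have "y = 3 \<or> y = 2 \<or> 4 \<le> y" by auto
        then have "dm y" using 2 two big y by auto
        then show "y \<in> D" by (rule dmD)
      qed
      then show ?thesis using that by blast
    qed
  next
    case False
    have "{1..n} - {1} \<subseteq> D"
    proof
      fix y assume y: "y \<in> {1..n} - {1}"
      then have "y = 2" using False by auto
      then have "dm y" using two y by auto
      then show "y \<in> D" by (rule dmD)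
    qed
    then show ?thesis using that by blast
  qed
  have "n - 1 \<le> card ({1..n} - {u})"
  proof -
    have "card ({1..n} - {u}) \<ge> card {1..n} - card {u}" by (rule diff_card_le_card_Diff) simp
    then show ?thesis by simp
  qed
  also have "\<dots> \<le> card D" using u by (rule card_mono[rotated]) (simp add: D_def fC)
  finally show ?thesis using cardD by simp
qed

lemma cov_new:
  assumes n3: "3 \<le> n" and c: "xi_cover m i j" and nb: "\<not> (i \<le> n \<and> j \<le> n)"
  shows "n \<le> i \<and> n \<le> j \<and> i \<le> m \<and> j \<le> m \<and> ((odd i \<and> j = Suc i) \<or> (even j \<and> i = Suc j))"
proof -
  have z: "zc i j" and b: "i \<le> m" "j \<le> m" using c unfolding cover_iff by auto
  have a: "j = Suc i \<or> i = Suc j" using zc_adj[OF z] .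
  then have "n \<le> i" "n \<le> j" using nb by auto
  then have "3 \<le> i" using n3 by simp
  then show ?thesis using z b \<open>n \<le> i\<close> \<open>n \<le> j\<close> zc_big by simp
qed

lemma cov_at1: "3 \<le> i \<Longrightarrow> Suc i \<le> m \<Longrightarrow> odd i \<Longrightarrow> xi_cover m i (Suc i)"
  unfolding cover_iff zc_def by auto

lemma cov_at2: "3 \<le> i \<Longrightarrow> Suc i \<le> m \<Longrightarrow> even i \<Longrightarrow> xi_cover m (Suc i) i"
  unfolding cover_iff zc_def by presburger

lemma cov_restrict: "xi_cover m i j \<Longrightarrow> i \<le> n \<Longrightarrow> j \<le> n \<Longrightarrow> xi_cover n i j"
  unfolding cover_iff by simp

lemma cov_mono: "xi_cover n i j \<Longrightarrow> n \<le> m \<Longrightarrow> xi_cover m i j"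
  unfolding cover_iff by simp

lemma extend:
  assumes v: "valid n B C" and m: "maxl n B C" and nm: "n \<le> m'"
    and new: "Bn \<union> Cn \<subseteq> {n<..m'}" and dis: "Bn \<inter> Cn = {}"
    and nv: "\<And>i j. xi_cover m' i j \<Longrightarrow> \<not> (i \<le> n \<and> j \<le> n) \<Longrightarrow>
       (i \<in> B \<union> Bn \<longrightarrow> j \<in> B \<union> Bn) \<and> (i \<in> C \<union> Cn \<longrightarrow> j \<in> B \<union> Bn)"
    and nm1: "\<And>y. n < y \<Longrightarrow> y \<le> m' \<Longrightarrow> y \<notin> Bn \<Longrightarrow> y \<notin> Cn \<Longrightarrow> \<exists>j. xi_cover m' y j \<and> j \<notin> B \<union> Bn"
    and nm2: "\<And>y. y \<in> Bn \<Longrightarrow> \<exists>i. xi_cover m' i y \<and> (i \<in> B \<union> Bn \<or> i \<in> C \<union> Cn)"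
  shows "valid m' (B \<union> Bn) (C \<union> Cn) \<and> maxl m' (B \<union> Bn) (C \<union> Cn)"
proof
  have BCn: "B \<union> C \<subseteq> {1..n}" using v unfolding valid_def by simp
  show "valid m' (B \<union> Bn) (C \<union> Cn)"
    unfolding valid_def
  proof (intro conjI allI impI)
    show "(B \<union> Bn) \<inter> (C \<union> Cn) = {}" using v dis new BCn unfolding valid_def by fastforce
    show "B \<union> Bn \<union> (C \<union> Cn) \<subseteq> {1..m'}" using new BCn nm by fastforce
  next
    fix i j assume c: "xi_cover m' i j" and i: "i \<in> B \<union> Bn"
    show "j \<in> B \<union> Bn"
    proof (cases "i \<le> n \<and> j \<le> n")
      case True
      then have "xi_cover n i j" using cov_restrict c by blast
      moreover have "i \<in> B" using i True new by auto
      ultimately show ?thesis using valid_cov[OF v] by blast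
    next
      case False then show ?thesis using nv[OF c] i by blast
    qed
  next
    fix i j assume c: "xi_cover m' i j" and i: "i \<in> C \<union> Cn"
    show "j \<in> B \<union> Bn"
    proof (cases "i \<le> n \<and> j \<le> n")
      case True
      then have "xi_cover n i j" using cov_restrict c by blast
      moreover have "i \<in> C" using i True new by auto
      ultimately show ?thesis using valid_covC[OF v] by blast
    next
      case False then show ?thesis using nv[OF c] i by blast
    qed
  qed
  show "maxl m' (B \<union> Bn) (C \<union> Cn)"
    unfolding maxl_def
  proof (intro conjI ballI impI)
    fix y assume y: "y \<in> {1..m'}" and yB: "y \<notin> B \<union> Bn" and yC: "y \<notin> C \<union> Cn"
    show "\<exists>j. xi_cover m' y j \<and> j \<notin> B \<union> Bn"
    proof (cases "y \<le> n")
      case True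
      then obtain j where c: "xi_cover n y j" and j: "j \<notin> B" using maxl1[OF m] y yB yC by auto
      have "j \<le> n" using c unfolding cover_iff by simp
      then have "j \<notin> Bn" using new by auto
      then show ?thesis using cov_mono[OF c nm] j by blast
    next
      case False then show ?thesis using nm1 y yB yC by auto
    qed
  next
    fix y assume y: "y \<in> B \<union> Bn"
    show "\<exists>i. xi_cover m' i y \<and> (i \<in> B \<union> Bn \<or> i \<in> C \<union> Cn)"
    proof (cases "y \<in> B")
      case True
      then obtain i where "xi_cover n i y" "i \<in> B \<or> i \<in> C" using maxl2[OF m] by blast
      then show ?thesis using cov_mono nm by blast
    next
      case False then show ?thesis using nm2 y by blast
    qed
  qed
qed

definition goodA :: "nat \<Rightarrow> nat \<Rightarrow> bool" where
  "goodA n k \<longleftrightarrow> (\<exists>B C. valid n B C \<and> maxl n B C \<and> card C = k \<and> n \<in> C)"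

definition goodK :: "nat \<Rightarrow> nat \<Rightarrow> bool" where
  "goodK n k \<longleftrightarrow> (\<exists>B C. valid n B C \<and> maxl n B C \<and> card C = k)"

lemma ext1:
  assumes "goodA n k" and n3: "3 \<le> n"
  shows "goodK (Suc n) k"
proof -
  obtain B C where v: "valid n B C" and m: "maxl n B C" and ck: "card C = k" and nC: "n \<in> C"
    using assms unfolding goodA_def by blast
  have nB: "n \<notin> B" using valid_disj[OF v nC] .
  have BCn: "B \<union> C \<subseteq> {1..n}" using v unfolding valid_def by simp
  have pairs: "(i = n \<and> j = Suc n \<and> odd n) \<or> (i = Suc n \<and> j = n \<and> even n)"
    if "xi_cover (Suc n) i j" "\<not> (i \<le> n \<and> j \<le> n)" for i j
    using cov_new[OF n3 that] by presburger
  show ?thesis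
  proof (cases "odd n")
    case True
    have "valid (Suc n) (B \<union> {Suc n}) (C \<union> {}) \<and> maxl (Suc n) (B \<union> {Suc n}) (C \<union> {})"
    proof (rule extend[OF v m])
      fix i j assume "xi_cover (Suc n) i j" "\<not> (i \<le> n \<and> j \<le> n)"
      then show "(i \<in> B \<union> {Suc n} \<longrightarrow> j \<in> B \<union> {Suc n}) \<and> (i \<in> C \<union> {} \<longrightarrow> j \<in> B \<union> {Suc n})"
        using pairs True nB BCn by auto
    next
      fix y assume "y \<in> {Suc n}"
      then show "\<exists>i. xi_cover (Suc n) i y \<and> (i \<in> B \<union> {Suc n} \<or> i \<in> C \<union> {})"
        using cov_at1[OF n3 _ True] nC by auto
    qed auto
    then show ?thesis unfolding goodK_def using ck by auto
  next
    case False
    have "valid (Suc n) (B \<union> {}) (C \<union> {}) \<and> maxl (Suc n) (B \<union> {}) (C \<union> {})"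
    proof (rule extend[OF v m])
      fix i j assume "xi_cover (Suc n) i j" "\<not> (i \<le> n \<and> j \<le> n)"
      then show "(i \<in> B \<union> {} \<longrightarrow> j \<in> B \<union> {}) \<and> (i \<in> C \<union> {} \<longrightarrow> j \<in> B \<union> {})"
        using pairs False BCn by auto
    next
      fix y assume "n < y" "y \<le> Suc n"
      then have "y = Suc n" by simp
      then show "\<exists>j. xi_cover (Suc n) y j \<and> j \<notin> B \<union> {}"
        using cov_at2[OF n3 _ ] False nB by auto
    qed auto
    then show ?thesis unfolding goodK_def using ck by auto
  qed
qed

lemma card_add_new: "valid n B C \<Longrightarrow> n < x \<Longrightarrow> card (C \<union> {x}) = Suc (card C)"
proof -
  assume v: "valid n B C" and x: "n < x"
  have fC: "finite C" using v unfolding valid_def by (auto intro: finite_subset)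
  have "x \<notin> C" using v x unfolding valid_def by auto
  then show ?thesis using fC by simp
qed

lemma ext2:
  assumes "goodA n k" and n3: "3 \<le> n"
  shows "goodA (Suc (Suc n)) (Suc k)"
proof -
  obtain B C where v: "valid n B C" and m: "maxl n B C" and ck: "card C = k" and nC: "n \<in> C"
    using assms unfolding goodA_def by blast
  have nB: "n \<notin> B" using valid_disj[OF v nC] .
  have BCn: "B \<union> C \<subseteq> {1..n}" using v unfolding valid_def by simp
  have pairs: "(i = n \<and> j = Suc n \<and> odd n) \<or> (i = Suc n \<and> j = n \<and> even n) \<or>
      (i = Suc n \<and> j = Suc (Suc n) \<and> even n) \<or> (i = Suc (Suc n) \<and> j = Suc n \<and> odd n)"
    if "xi_cover (Suc (Suc n)) i j" "\<not> (i \<le> n \<and> j \<le> n)" for i j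
    using cov_new[OF n3 that] by presburger
  have ck': "card (C \<union> {Suc (Suc n)}) = Suc k" using card_add_new[OF v] ck by simp
  show ?thesis
  proof (cases "odd n")
    case True
    have "valid (Suc (Suc n)) (B \<union> {Suc n}) (C \<union> {Suc (Suc n)}) \<and> maxl (Suc (Suc n)) (B \<union> {Suc n}) (C \<union> {Suc (Suc n)})"
    proof (rule extend[OF v m])
      fix i j assume c: "xi_cover (Suc (Suc n)) i j" and nb: "\<not> (i \<le> n \<and> j \<le> n)"
      from pairs[OF c nb] show "(i \<in> B \<union> {Suc n} \<longrightarrow> j \<in> B \<union> {Suc n}) \<and> (i \<in> C \<union> {Suc (Suc n)} \<longrightarrow> j \<in> B \<union> {Suc n})"
        using True nB BCn by auto
    next
      fix y assume "y \<in> {Suc n}"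
      then show "\<exists>i. xi_cover (Suc (Suc n)) i y \<and> (i \<in> B \<union> {Suc n} \<or> i \<in> C \<union> {Suc (Suc n)})"
        using cov_at1[OF n3 _ True, of "Suc (Suc n)"] nC by (intro exI[of _ n]) auto
    qed auto
    then show ?thesis unfolding goodA_def using ck' by blast
  next
    case False
    have "valid (Suc (Suc n)) (B \<union> {}) (C \<union> {Suc (Suc n)}) \<and> maxl (Suc (Suc n)) (B \<union> {}) (C \<union> {Suc (Suc n)})"
    proof (rule extend[OF v m])
      fix i j assume c: "xi_cover (Suc (Suc n)) i j" and nb: "\<not> (i \<le> n \<and> j \<le> n)"
      from pairs[OF c nb] show "(i \<in> B \<union> {} \<longrightarrow> j \<in> B \<union> {}) \<and> (i \<in> C \<union> {Suc (Suc n)} \<longrightarrow> j \<in> B \<union> {})"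
        using False BCn by auto
    next
      fix y assume "n < y" "y \<le> Suc (Suc n)" "y \<notin> {}" "y \<notin> {Suc (Suc n)}"
      then have "y = Suc n" by simp
      then show "\<exists>j. xi_cover (Suc (Suc n)) y j \<and> j \<notin> B \<union> {}"
        using cov_at2[OF n3 _ ] False nB by (intro exI[of _ n]) auto
    qed auto
    then show ?thesis unfolding goodA_def using ck' by auto
  qed
qed

lemma ext3:
  assumes "goodA n k" and n3: "3 \<le> n"
  shows "goodA (Suc (Suc (Suc n))) (Suc k)"
proof -
  obtain B C where v: "valid n B C" and m: "maxl n B C" and ck: "card C = k" and nC: "n \<in> C"
    using assms unfolding goodA_def by blast
  have nB: "n \<notin> B" using valid_disj[OF v nC] .
  have BCn: "B \<union> C \<subseteq> {1..n}" using v unfolding valid_def by simp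
  have pairs: "(i = n \<and> j = Suc n \<and> odd n) \<or> (i = Suc n \<and> j = n \<and> even n) \<or>
      (i = Suc n \<and> j = Suc (Suc n) \<and> even n) \<or> (i = Suc (Suc n) \<and> j = Suc n \<and> odd n) \<or>
      (i = Suc (Suc n) \<and> j = Suc (Suc (Suc n)) \<and> odd n) \<or> (i = Suc (Suc (Suc n)) \<and> j = Suc (Suc n) \<and> even n)"
    if "xi_cover (Suc (Suc (Suc n))) i j" "\<not> (i \<le> n \<and> j \<le> n)" for i j
    using cov_new[OF n3 that] by presburger
  have ck': "card (C \<union> {Suc (Suc (Suc n))}) = Suc k" using card_add_new[OF v] ck by simp
  show ?thesis
  proof (cases "odd n")
    case True
    have "valid (Suc (Suc (Suc n))) (B \<union> {Suc n}) (C \<union> {Suc (Suc (Suc n))}) \<and> maxl (Suc (Suc (Suc n))) (B \<union> {Suc n}) (C \<union> {Suc (Suc (Suc n))})"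
    proof (rule extend[OF v m])
      fix i j assume c: "xi_cover (Suc (Suc (Suc n))) i j" and nb: "\<not> (i \<le> n \<and> j \<le> n)"
      from pairs[OF c nb] show "(i \<in> B \<union> {Suc n} \<longrightarrow> j \<in> B \<union> {Suc n}) \<and> (i \<in> C \<union> {Suc (Suc (Suc n))} \<longrightarrow> j \<in> B \<union> {Suc n})"
        using True nB BCn by auto
    next
      fix y assume "n < y" "y \<le> Suc (Suc (Suc n))" "y \<notin> {Suc n}" "y \<notin> {Suc (Suc (Suc n))}"
      then have "y = Suc (Suc n)" by auto
      moreover have "odd (Suc (Suc n))" using True by simp
      ultimately show "\<exists>j. xi_cover (Suc (Suc (Suc n))) y j \<and> j \<notin> B \<union> {Suc n}"
        using cov_at1[of "Suc (Suc n)" "Suc (Suc (Suc n))"] n3 BCn by (intro exI[of _ "Suc (Suc (Suc n))"]) auto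
    next
      fix y assume "y \<in> {Suc n}"
      then show "\<exists>i. xi_cover (Suc (Suc (Suc n))) i y \<and> (i \<in> B \<union> {Suc n} \<or> i \<in> C \<union> {Suc (Suc (Suc n))})"
        using cov_at1[OF n3 _ True, of "Suc (Suc (Suc n))"] nC by (intro exI[of _ n]) auto
    qed auto
    then show ?thesis unfolding goodA_def using ck' by blast
  next
    case False
    have "valid (Suc (Suc (Suc n))) (B \<union> {Suc (Suc n)}) (C \<union> {Suc (Suc (Suc n))}) \<and> maxl (Suc (Suc (Suc n))) (B \<union> {Suc (Suc n)}) (C \<union> {Suc (Suc (Suc n))})"
    proof (rule extend[OF v m])
      fix i j assume c: "xi_cover (Suc (Suc (Suc n))) i j" and nb: "\<not> (i \<le> n \<and> j \<le> n)"
      from pairs[OF c nb] show "(i \<in> B \<union> {Suc (Suc n)} \<longrightarrow> j \<in> B \<union> {Suc (Suc n)}) \<and> (i \<in> C \<union> {Suc (Suc (Suc n))} \<longrightarrow> j \<in> B \<union> {Suc (Suc n)})"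
        using False BCn by auto
    next
      fix y assume "n < y" "y \<le> Suc (Suc (Suc n))" "y \<notin> {Suc (Suc n)}" "y \<notin> {Suc (Suc (Suc n))}"
      then have "y = Suc n" by auto
      then show "\<exists>j. xi_cover (Suc (Suc (Suc n))) y j \<and> j \<notin> B \<union> {Suc (Suc n)}"
        using cov_at2[OF n3, of "Suc (Suc (Suc n))"] False nB by (intro exI[of _ n]) auto
    next
      fix y assume "y \<in> {Suc (Suc n)}"
      moreover have "even (Suc (Suc n))" using False by simp
      ultimately show "\<exists>i. xi_cover (Suc (Suc (Suc n))) i y \<and> (i \<in> B \<union> {Suc (Suc n)} \<or> i \<in> C \<union> {Suc (Suc (Suc n))})"
        using cov_at2[of "Suc (Suc n)" "Suc (Suc (Suc n))"] n3 by (intro exI[of _ "Suc (Suc (Suc n))"]) auto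
    qed auto
    then show ?thesis unfolding goodA_def using ck' by blast
  qed
qed

lemma c21: "2 \<le> n \<Longrightarrow> xi_cover n 2 1"
  unfolding cover_iff zc_def by simp

lemma c32: "3 \<le> n \<Longrightarrow> xi_cover n 3 2"
  unfolding cover_iff zc_def by simp

lemma base2: "goodA 2 1"
proof -
  have "valid 2 {1} {2}" unfolding valid_def cover_iff zc_def by auto
  moreover have "maxl 2 {1} {2}" unfolding maxl_def using c21[of 2] by auto
  ultimately show ?thesis unfolding goodA_def by (intro exI[of _ "{1}"] exI[of _ "{2}"]) auto
qed

lemma base3: "goodA 3 1"
proof -
  have "valid 3 {1, 2} {3}" unfolding valid_def cover_iff zc_def by auto
  moreover have "maxl 3 {1, 2} {3}" unfolding maxl_def using c21[of 3] c32[of 3] by auto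
  ultimately show ?thesis unfolding goodA_def by (intro exI[of _ "{1, 2}"] exI[of _ "{3}"]) auto
qed

lemma base4: "goodA 4 2"
proof -
  have "valid 4 {} {1, 4}" unfolding valid_def cover_iff zc_def by auto
  moreover have "maxl 4 {} {1, 4}"
    unfolding maxl_def
  proof (intro conjI ballI impI)
    fix y :: nat assume "y \<in> {1..4}" "y \<notin> {}" "y \<notin> {1, 4}"
    then have "y = 2 \<or> y = 3" by auto
    then show "\<exists>j. xi_cover 4 y j \<and> j \<notin> {}"
      using c21[of 4] c32[of 4] by auto
  qed auto
  ultimately show ?thesis unfolding goodA_def by (intro exI[of _ "{}"] exI[of _ "{1, 4}"]) auto
qed

lemma goodA_range: "2 \<le> n \<Longrightarrow> n \<le> 3 * k \<Longrightarrow> 2 * k \<le> n \<Longrightarrow> goodA n k"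
proof (induction n arbitrary: k rule: less_induct)
  case (less n)
  consider "n = 2" | "n = 3" | "n = 4" | "5 \<le> n" using less.prems by linarith
  then show ?case
  proof cases
    case 1 then have "k = 1" using less.prems by simp
    then show ?thesis using base2 1 by simp
  next
    case 2 then have "k = 1" using less.prems by simp
    then show ?thesis using base3 2 by simp
  next
    case 3 then have "k = 2" using less.prems by simp
    then show ?thesis using base4 3 by simp
  next
    case 4
    have "0 < k" using 4 less.prems by simp
    then obtain k' where k': "k = Suc k'" using gr0_implies_Suc by blast
    show ?thesis
    proof (cases "n + 1 \<le> 3 * k")
      case True
      have "goodA (n - 2) k'"
        using less.IH[of "n - 2" k'] 4 True k' less.prems by simp
      moreover have "Suc (Suc (n - 2)) = n" using 4 by simp
      ultimately show ?thesis using ext2[of "n - 2" k'] 4 k' by simp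
    next
      case False
      then have n3k: "n = 3 * k" using less.prems by simp
      have "goodA (n - 3) k'"
        using less.IH[of "n - 3" k'] 4 n3k k' by simp
      moreover have "Suc (Suc (Suc (n - 3))) = n" using 4 by simp
      moreover have "6 \<le> n" using n3k 4 by simp
      ultimately show ?thesis using ext3[of "n - 3" k'] k' by simp
    qed
  qed
qed

lemma goodK_range:
  assumes n2: "2 \<le> n" and k: "n \<le> 3 * k + 1" "2 * k \<le> n"
  shows "goodK n k"
proof (cases "n \<le> 3 * k")
  case True
  then have "goodA n k" using goodA_range n2 k by blast
  then show ?thesis unfolding goodA_def goodK_def by blast
next
  case False
  then have n3k: "n = 3 * k + 1" using k by simp
  then have n4: "4 \<le> n" using n2 by simp
  have "goodA (n - 1) k" using goodA_range[of "n - 1" k] n4 n3k by simp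
  then have e: "goodK (Suc (n - 1)) k" by (rule ext1) (use n4 in simp)
  have "Suc (n - 1) = n" using n4 by simp
  then show ?thesis using e by simp
qed

lemma div2_iff: "(k::nat) \<le> n div 2 \<longleftrightarrow> 2 * k \<le> n"
proof -
  have "k \<le> n div 2 \<longleftrightarrow> \<not> (n div 2 < k)" by auto
  also have "\<dots> \<longleftrightarrow> \<not> (n < k * 2)" using div_less_iff_less_mult[of 2 n k] by simp
  finally show ?thesis by linarith
qed

lemma div3_iff: "(n + 1) div 3 \<le> (k::nat) \<longleftrightarrow> n \<le> 3 * k + 1"
proof -
  have "(n + 1) div 3 \<le> k \<longleftrightarrow> (n + 1) div 3 < Suc k" by auto
  also have "\<dots> \<longleftrightarrow> n + 1 < Suc k * 3" using div_less_iff_less_mult[of 3 "n + 1" "Suc k"] by simp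
  finally show ?thesis by linarith
qed

lemma Kset_big: "2 \<le> n \<Longrightarrow> {k. goodK n k} = {(n + 1) div 3 .. n div 2}"
proof
  assume n2: "2 \<le> n"
  show "{k. goodK n k} \<subseteq> {(n + 1) div 3 .. n div 2}"
  proof
    fix k assume "k \<in> {k. goodK n k}"
    then obtain B C where v: "valid n B C" and m: "maxl n B C" and ck: "card C = k"
      unfolding goodK_def by blast
    have "k \<le> n div 2" using ub[OF v n2] ck by simp
    moreover have "n \<le> 3 * k + 1" using lb[OF v m] ck by simp
    then have "(n + 1) div 3 \<le> k" using div3_iff by simp
    ultimately show "k \<in> {(n + 1) div 3 .. n div 2}" by simp
  qed
  show "{(n + 1) div 3 .. n div 2} \<subseteq> {k. goodK n k}"
  proof
    fix k assume "k \<in> {(n + 1) div 3 .. n div 2}"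
    then have "n \<le> 3 * k + 1" "2 * k \<le> n" using div2_iff div3_iff by auto
    then show "k \<in> {k. goodK n k}" using goodK_range n2 by simp
  qed
qed

lemma Kset0: "{k. goodK 0 k} = {0}"
proof -
  have "valid 0 {} {}" "maxl 0 {} {}" unfolding valid_def maxl_def cover_iff by auto
  then have "goodK 0 0" unfolding goodK_def by force
  moreover have "k = 0" if g: "goodK 0 k" for k
  proof -
    obtain B C where "valid 0 B C" "card C = k" using g unfolding goodK_def by blast
    then have "C = {}" "card C = k" unfolding valid_def by auto
    then show ?thesis by simp
  qed
  ultimately show ?thesis by auto
qed

lemma Kset1: "{k. goodK 1 k} = {1}"
proof -
  have nc: "\<not> xi_cover 1 i j" for i j unfolding cover_iff zc_def by auto
  have "valid 1 {} {1}" "maxl 1 {} {1}" unfolding valid_def maxl_def using nc by auto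
  then have "goodK 1 1" unfolding goodK_def by force
  moreover have "k = 1" if g: "goodK 1 k" for k
  proof -
    obtain B C where v: "valid 1 B C" and m: "maxl 1 B C" and ck: "card C = k"
      using g unfolding goodK_def by blast
    have "1 \<notin> B" using maxl2[OF m] nc by blast
    moreover have "1 \<in> B \<or> 1 \<in> C" using maxl1[OF m, of 1] nc by auto
    ultimately have "1 \<in> C" by simp
    moreover have "C \<subseteq> {1}" using v unfolding valid_def by auto
    ultimately have "C = {1}" by auto
    then show ?thesis using ck by simp
  qed
  ultimately show ?thesis by auto
qed

lemma hset: "{k. h n k \<noteq> 0} = {k. goodK n k}"
proof -
  have "h n k \<noteq> 0 \<longleftrightarrow> goodK n k" for k
  proof -
    let ?M = "{S. maximal_induced_cube (omega_vertices n) omega_adj k S}"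
    have "?M \<subseteq> Pow (omega_vertices n)"
      unfolding maximal_induced_cube_def induced_cube_def by auto
    then have fin: "finite ?M" by (rule finite_subset) (simp add: fin_omega)
    have "h n k \<noteq> 0 \<longleftrightarrow> ?M \<noteq> {}" unfolding h_def using fin by simp
    also have "\<dots> \<longleftrightarrow> (\<exists>S. maximal_induced_cube (omega_vertices n) omega_adj k S)" by auto
    also have "\<dots> \<longleftrightarrow> goodK n k" unfolding goodK_def by (rule maxcube_iff)
    finally show ?thesis .
  qed
  then show ?thesis by simp
qed

theorem mainTheorem15:
  fixes n :: nat
  shows "H_nonzero_terms n = (if n mod 6 = 4 then n div 6 + 2 else n div 6 + 1)"
proof -
  have H: "H_nonzero_terms n = card {k. goodK n k}" unfolding H_nonzero_terms_def hset ..
  consider "n = 0" | "n = 1" | "2 \<le> n" by linarith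
  then show ?thesis
  proof cases
    case 1 then show ?thesis using H Kset0 by simp
  next
    case 2 then show ?thesis using H Kset1 by simp
  next
    case 3
    then have "H_nonzero_terms n = Suc (n div 2) - (n + 1) div 3" using H Kset_big by simp
    also have "\<dots> = (if n mod 6 = 4 then n div 6 + 2 else n div 6 + 1)"
    proof -
      define q where "q = n div 6"
      define r where "r = n mod 6"
      have n: "n = 6 * q + r" and r: "r < 6" unfolding q_def r_def by auto
      have d2: "n div 2 = 3 * q + r div 2" unfolding n by simp
      have d3: "(n + 1) div 3 = 2 * q + (r + 1) div 3" unfolding n by simp
      have "r = 0 \<or> r = 1 \<or> r = 2 \<or> r = 3 \<or> r = 4 \<or> r = 5" using r by auto
      then show ?thesis unfolding d2 d3 q_def[symmetric] r_def[symmetric] by auto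
    qed
    finally show ?thesis .
  qed
qed

end
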